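(* Let $A=H+S\in\mathbb{C}^{n,n}$ with $H=H^*\neq 0$ positive semidefinite and $S=-S^*\neq 0$. Let $U\in\mathbb{C}^{n,n}$ be unitary, $r\geq 2$, and $n_1\geq\cdots\geq n_{r-1}>0$, $n_r\geq 0$ with $\sum n_i=n$, such that $U^*HU=\mathrm{diag}(H_{11},0)$ with $H_{11}=H_{11}^*\in\mathbb{C}^{n_1,n_1}$ positive definite, and $U^*SU=[S_{ij}]_{i,j=1}^r$ (blocks $S_{ij}\in\mathbb{C}^{n_i,n_j}$) with $S_{ij}=0$ for $|i-j|>1$, $S_{i,r}=S_{r,i}=0$ for $i<r$, $S_{ii}=-S_{ii}^*$, and $S_{i,i-1}=-S_{i-1,i}^*=[\Sigma_{i,i-1}\;\,0]$ with $\Sigma_{i,i-1}\in\mathbb{C}^{n_i,n_i}$ nonsingular for $i=2,\dots,r-1$. Set $\widehat{A}_{11}=H_{11}+S_{11}$ and $\mathcal{S}_0:=\widehat{A}_{11}$, and define recursively $\mathcal{S}_k=S_{k+1,k+1}-S_{k+1,k}\,\mathcal{S}_{k-1}^{-1}\,S_{k,k+1}$ for $k=1,\dots,r-2$. Then all these inverses exist, $\widehat{A}_{11}$ and the Schur complements $\mathcal{S}_1,\dots,\mathcal{S}_{r-2}$ are positive definite, and $U^*AU$ is transformed via this block Gaussian elimination (Schur complement reduction), i.e. $U^*AU=L\,D\,W$ with $L$ block unit lower triangular and $W$ block unit upper triangular, into the block diagonal form $$D=\mathrm{diag}\big(\widehat{A}_{11},\mathcal{S}_1,\dots,\mathcal{S}_{r-2},S_{r,r}\big),$$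 where the skew-Hermitian block $S_{r,r}$ is absent if $n_r=0$.
   Context: A (not necessarily Hermitian) matrix $M\in\mathbb{C}^{m,m}$ is called positive definite (resp. positive semidefinite) if its Hermitian part $\frac12(M+M^* )$ is positive definite (resp. positive semidefinite). $M^*$ denotes the conjugate transpose. *)

theory Defs
  imports "Jordan_Normal_Form.Matrix"
begin

definition adj :: "complex mat \<Rightarrow> complex mat" where
  "adj M = transpose_mat (map_mat cnj M)"

definition qform :: "complex mat \<Rightarrow> complex vec \<Rightarrow> complex" where
  "qform M x = conjugate x \<bullet> (M *\<^sub>v x)"

definition hermitian :: "complex mat \<Rightarrow> bool" where
  "hermitian M \<longleftrightarrow> adj M = M"

definition skew_hermitian :: "complex mat \<Rightarrow> bool" where
  "skew_hermitian M \<longleftrightarrow> adj M = - M"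

definition herm_pd :: "nat \<Rightarrow> complex mat \<Rightarrow> bool" where
  "herm_pd m K \<longleftrightarrow> K \<in> carrier_mat m m \<and> hermitian K \<and>
     (\<forall>x\<in>carrier_vec m. x \<noteq> 0\<^sub>v m \<longrightarrow> 0 < Re (qform K x))"

definition herm_psd :: "nat \<Rightarrow> complex mat \<Rightarrow> bool" where
  "herm_psd m K \<longleftrightarrow> K \<in> carrier_mat m m \<and> hermitian K \<and>
     (\<forall>x\<in>carrier_vec m. 0 \<le> Re (qform K x))"

text \<open>Hermitian part; a (not necessarily Hermitian) matrix is positive (semi)definite
  iff its Hermitian part is.\<close>
definition herm_part :: "complex mat \<Rightarrow> complex mat" where
  "herm_part M = (1/2 :: complex) \<cdot>\<^sub>m (M + adj M)"

definition pos_def :: "nat \<Rightarrow> complex mat \<Rightarrow> bool" where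
  "pos_def m M \<longleftrightarrow> M \<in> carrier_mat m m \<and> herm_pd m (herm_part M)"

definition pos_semidef :: "nat \<Rightarrow> complex mat \<Rightarrow> bool" where
  "pos_semidef m M \<longleftrightarrow> M \<in> carrier_mat m m \<and> herm_psd m (herm_part M)"

definition unitary :: "nat \<Rightarrow> complex mat \<Rightarrow> bool" where
  "unitary m U \<longleftrightarrow> U \<in> carrier_mat m m \<and> adj U * U = 1\<^sub>m m \<and> U * adj U = 1\<^sub>m m"

text \<open>Matrix inverse (meaningful when the matrix is invertible).\<close>
definition minv :: "complex mat \<Rightarrow> complex mat" where
  "minv M = (SOME B. inverts_mat M B \<and> inverts_mat B M)"

text \<open>Block partition with block sizes ns 1, ..., ns r (1-based, as in the paper).
  Block i occupies the rows/columns off ns i ..< off ns i + ns i.\<close>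
definition off :: "(nat \<Rightarrow> nat) \<Rightarrow> nat \<Rightarrow> nat" where
  "off ns i = (\<Sum>j\<in>{1..<i}. ns j)"

definition blk :: "(nat \<Rightarrow> nat) \<Rightarrow> complex mat \<Rightarrow> nat \<Rightarrow> nat \<Rightarrow> complex mat" where
  "blk ns M i j = mat (ns i) (ns j) (\<lambda>(a,b). M $$ (off ns i + a, off ns j + b))"

text \<open>Schur complements: schur 0 = H11 + S11, and
  schur k = S_{k+1,k+1} - S_{k+1,k} (schur (k-1))^{-1} S_{k,k+1}
  where Ht = U^* H U and St = U^* S U.\<close>
primrec schur :: "(nat \<Rightarrow> nat) \<Rightarrow> complex mat \<Rightarrow> complex mat \<Rightarrow> nat \<Rightarrow> complex mat" where
  "schur ns Ht St 0 = blk ns Ht 1 1 + blk ns St 1 1"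
| "schur ns Ht St (Suc k) = blk ns St (k+2) (k+2)
     - blk ns St (k+2) (k+1) * minv (schur ns Ht St k) * blk ns St (k+1) (k+2)"

end

theory Submission
  imports Defs "Jordan_Normal_Form.Determinant"
begin

lemma adj_carrier[simp]: "A \<in> carrier_mat m k \<Longrightarrow> adj A \<in> carrier_mat k m"
  unfolding adj_def by auto

lemma adj_dims[simp]: "dim_row (adj A) = dim_col A" "dim_col (adj A) = dim_row A"
  unfolding adj_def by auto

lemma adj_mult_vec_carrier[simp]: "B \<in> carrier_mat m k \<Longrightarrow> adj B *\<^sub>v x \<in> carrier_vec k"
  unfolding carrier_vec_def by auto

lemma adj_index[simp]: "i < dim_col A \<Longrightarrow> j < dim_row A \<Longrightarrow> adj A $$ (i,j) = cnj (A $$ (j,i))"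
  unfolding adj_def by auto

lemma adj_adj[simp]: "adj (adj A) = A"
  by (rule eq_matI, auto)

lemma adj_mult: assumes "A \<in> carrier_mat m k" "B \<in> carrier_mat k l"
  shows "adj (A * B) = adj B * adj A"
  using assms by (intro eq_matI) (auto simp: scalar_prod_def row_def col_def mult.commute)

lemma adj_one[simp]: "adj (1\<^sub>m n) = 1\<^sub>m n"
  by (rule eq_matI, auto)

lemma adj_uminus: "adj (- A) = - adj A"
  by (rule eq_matI, auto)

lemma adj_add: "A \<in> carrier_mat m k \<Longrightarrow> B \<in> carrier_mat m k \<Longrightarrow> adj (A + B) = adj A + adj B"
  by (rule eq_matI, auto)

lemma adj_minus: "A \<in> carrier_mat m k \<Longrightarrow> B \<in> carrier_mat m k \<Longrightarrow> adj (A - B) = adj A - adj B"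
  by (rule eq_matI, auto)

lemma adj_smult: "adj (c \<cdot>\<^sub>m A) = cnj c \<cdot>\<^sub>m adj A"
  by (rule eq_matI, auto)

lemma sprod_adj: assumes B: "B \<in> carrier_mat m k" and x: "x \<in> carrier_vec m" and y: "y \<in> carrier_vec k"
  shows "conjugate x \<bullet> (B *\<^sub>v y) = conjugate (adj B *\<^sub>v x) \<bullet> y"
proof -
  have "conjugate x \<bullet> (B *\<^sub>v y) = (\<Sum>i<m. cnj (x $ i) * (\<Sum>j<k. B $$ (i,j) * y $ j))"
    using assms by (auto simp: scalar_prod_def row_def lessThan_atLeast0)
  also have "\<dots> = (\<Sum>i<m. \<Sum>j<k. cnj (x $ i) * B $$ (i,j) * y $ j)"
    by (simp add: sum_distrib_left mult.assoc)
  also have "\<dots> = (\<Sum>j<k. \<Sum>i<m. cnj (x $ i) * B $$ (i,j) * y $ j)"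
    by (rule sum.swap)
  also have "\<dots> = (\<Sum>j<k. cnj (\<Sum>i<m. cnj (B $$ (i,j)) * x $ i) * y $ j)"
    by (simp add: sum_distrib_right mult.commute) (simp add: sum_distrib_left)
  also have "\<dots> = conjugate (adj B *\<^sub>v x) \<bullet> y"
    using assms by (auto simp: scalar_prod_def row_def lessThan_atLeast0 intro!: sum.cong)
  finally show ?thesis .
qed

lemma sprod_conj_swap: assumes "x \<in> carrier_vec m" "y \<in> carrier_vec m"
  shows "conjugate x \<bullet> y = cnj (conjugate y \<bullet> x)"
  using assms by (auto simp: scalar_prod_def mult.commute intro!: sum.cong)

lemma qform_adj: assumes "A \<in> carrier_mat m m" "x \<in> carrier_vec m"
  shows "qform (adj A) x = cnj (qform A x)"
proof -
  have "qform (adj A) x = conjugate (A *\<^sub>v x) \<bullet> x"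
    unfolding qform_def using sprod_adj[of "adj A" m m x x] assms by simp
  also have "\<dots> = cnj (qform A x)" unfolding qform_def
    using assms by (subst sprod_conj_swap[of _ m]) auto
  finally show ?thesis .
qed

lemma qform_add: assumes "A \<in> carrier_mat m m" "B \<in> carrier_mat m m" "x \<in> carrier_vec m"
  shows "qform (A + B) x = qform A x + qform B x"
  unfolding qform_def using assms
  by (simp add: add_mult_distrib_mat_vec scalar_prod_add_distrib[of _ m])

lemma qform_minus: assumes "A \<in> carrier_mat m m" "B \<in> carrier_mat m m" "x \<in> carrier_vec m"
  shows "qform (A - B) x = qform A x - qform B x"
  unfolding qform_def using assms
  by (simp add: minus_mult_distrib_mat_vec scalar_prod_minus_distrib[of _ m])

lemma qform_smult: assumes "A \<in> carrier_mat m m" "x \<in> carrier_vec m"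
  shows "qform (c \<cdot>\<^sub>m A) x = c * qform A x"
  unfolding qform_def using assms
  by (auto simp: scalar_prod_def sum_distrib_left row_def mult_mat_vec_def ac_simps intro!: sum.cong)

lemma qform_sandwich: assumes B: "B \<in> carrier_mat m k" and Y: "Y \<in> carrier_mat k k" and x: "x \<in> carrier_vec m"
  shows "qform (B * Y * adj B) x = qform Y (adj B *\<^sub>v x)"
proof -
  have "(B * Y * adj B) *\<^sub>v x = B *\<^sub>v (Y *\<^sub>v (adj B *\<^sub>v x))"
  proof -
    have "(B * Y * adj B) *\<^sub>v x = (B * Y) *\<^sub>v (adj B *\<^sub>v x)"
      using assms by (intro assoc_mult_mat_vec[of _ m k]) auto
    also have "\<dots> = B *\<^sub>v (Y *\<^sub>v (adj B *\<^sub>v x))"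
      using assms by (intro assoc_mult_mat_vec[of _ m k]) (auto intro: mult_mat_vec_carrier)
    finally show ?thesis .
  qed
  then show ?thesis unfolding qform_def
    using sprod_adj[OF B x, of "Y *\<^sub>v (adj B *\<^sub>v x)"] assms by simp
qed

lemma Re_qform_herm_part: assumes "A \<in> carrier_mat m m" "x \<in> carrier_vec m"
  shows "Re (qform (herm_part A) x) = Re (qform A x)"
  unfolding herm_part_def using assms
  by (simp add: qform_smult[of _ m] qform_add[of _ m] qform_adj)

lemma herm_part_herm: assumes "A \<in> carrier_mat m m" shows "hermitian (herm_part A)"
  unfolding hermitian_def herm_part_def using assms
  by (simp add: adj_smult adj_add[of _ m m] comm_add_mat[of _ m m])

lemma pos_def_iff: "pos_def m A \<longleftrightarrow> A \<in> carrier_mat m m \<and>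
    (\<forall>x\<in>carrier_vec m. x \<noteq> 0\<^sub>v m \<longrightarrow> 0 < Re (qform A x))"
  unfolding pos_def_def herm_pd_def using herm_part_herm Re_qform_herm_part
  by (auto simp: herm_part_def)

lemma skew_Re_qform: assumes "A \<in> carrier_mat m m" "skew_hermitian A" "x \<in> carrier_vec m"
  shows "Re (qform A x) = 0"
proof -
  have "qform (adj A) x = qform (- A) x" using assms(2) unfolding skew_hermitian_def by simp
  also have "\<dots> = - qform A x" unfolding qform_def using assms by simp
  finally have "cnj (qform A x) = - qform A x" using qform_adj[OF assms(1,3)] by simp
  then have "Re (cnj (qform A x)) = Re (- qform A x)" by simp
  then show ?thesis by simp
qed

lemma off_Suc: "1 \<le> i \<Longrightarrow> off ns (Suc i) = off ns i + ns i"
  unfolding off_def by (simp add: atLeastLessThanSuc add.commute)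

lemma off_1[simp]: "off ns (Suc 0) = 0" "off ns 1 = 0"
  unfolding off_def by auto

lemma off_mono: "i \<le> j \<Longrightarrow> off ns i \<le> off ns j"
  unfolding off_def by (rule sum_mono2) auto

definition bi :: "(nat \<Rightarrow> nat) \<Rightarrow> nat \<Rightarrow> nat" where
  "bi ns p = (LEAST i. p < off ns (Suc i))"

lemma bi_props: assumes p: "p < off ns (Suc r)"
  shows "1 \<le> bi ns p" "bi ns p \<le> r" "off ns (bi ns p) \<le> p" "p < off ns (bi ns p) + ns (bi ns p)"
proof -
  let ?i = "bi ns p"
  have lt: "p < off ns (Suc ?i)" unfolding bi_def by (rule LeastI[of _ r], rule p)
  show le: "?i \<le> r" unfolding bi_def by (rule Least_le, rule p)
  show i1: "1 \<le> ?i" using lt by (cases ?i) auto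
  have "\<not> p < off ns (Suc (?i - 1))" unfolding bi_def
    by (rule not_less_Least) (use i1 in \<open>auto simp: bi_def\<close>)
  then show "off ns ?i \<le> p" using i1 by simp
  show "p < off ns ?i + ns ?i" using lt off_Suc[OF i1] by simp
qed

lemma bi_off: assumes "1 \<le> i" "a < ns i" shows "bi ns (off ns i + a) = i"
  unfolding bi_def
proof (rule Least_equality)
  show "off ns i + a < off ns (Suc i)" using assms off_Suc[of i ns] by simp
  fix j assume "off ns i + a < off ns (Suc j)"
  then show "i \<le> j" using off_mono[of "Suc j" i ns] by (cases "i \<le> j") auto
qed

lemma sum_lessThan_add: "(\<Sum>s<(x::nat) + y. g s) = (\<Sum>s<x. g s) + (\<Sum>a<y. g (x + a))"
  by (induction y) (auto simp: add.assoc)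

lemma sum_split_blocks: "(\<Sum>s<off ns (Suc m). g s) = (\<Sum>t\<in>{1..m}. \<Sum>a<ns t. g (off ns t + a))"
proof (induction m)
  case 0 then show ?case by simp
next
  case (Suc m)
  have "off ns (Suc (Suc m)) = off ns (Suc m) + ns (Suc m)" by (rule off_Suc) simp
  then show ?case using Suc by (simp add: sum_lessThan_add)
qed

definition asm :: "(nat \<Rightarrow> nat) \<Rightarrow> nat \<Rightarrow> (nat \<Rightarrow> nat \<Rightarrow> complex mat) \<Rightarrow> complex mat" where
  "asm ns r F = mat (off ns (Suc r)) (off ns (Suc r))
     (\<lambda>(p,q). F (bi ns p) (bi ns q) $$ (p - off ns (bi ns p), q - off ns (bi ns q)))"

lemma asm_carrier[simp]: "asm ns r F \<in> carrier_mat (off ns (Suc r)) (off ns (Suc r))"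
  unfolding asm_def by auto

lemma asm_dims[simp]: "dim_row (asm ns r F) = off ns (Suc r)" "dim_col (asm ns r F) = off ns (Suc r)"
  unfolding asm_def by auto

lemma off_lt: assumes "1 \<le> i" "i \<le> r" "a < ns i" shows "off ns i + a < off ns (Suc r)"
  using assms off_Suc[of i ns] off_mono[of "Suc i" "Suc r" ns] by simp

lemma blk_asm: assumes "i \<in> {1..r}" "j \<in> {1..r}" "F i j \<in> carrier_mat (ns i) (ns j)"
  shows "blk ns (asm ns r F) i j = F i j"
  using assms off_lt[of i r] off_lt[of j r]
  by (intro eq_matI) (auto simp: blk_def asm_def bi_off)

lemma asm_blk: assumes "M \<in> carrier_mat (off ns (Suc r)) (off ns (Suc r))"
  shows "asm ns r (blk ns M) = M"
proof (rule eq_matI)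
  fix p q assume "p < dim_row M" "q < dim_col M"
  then have p: "p < off ns (Suc r)" and q: "q < off ns (Suc r)" using assms by auto
  show "asm ns r (blk ns M) $$ (p, q) = M $$ (p, q)"
    using bi_props[OF p] bi_props[OF q] p q by (simp add: asm_def blk_def)
qed (use assms in \<open>auto simp: asm_def\<close>)

lemma blk_carrier[simp]: "blk ns M i j \<in> carrier_mat (ns i) (ns j)"
  unfolding blk_def by auto

lemma blk_add: assumes "A \<in> carrier_mat (off ns (Suc r)) (off ns (Suc r))"
  "B \<in> carrier_mat (off ns (Suc r)) (off ns (Suc r))" "i \<in> {1..r}" "j \<in> {1..r}"
  shows "blk ns (A + B) i j = blk ns A i j + blk ns B i j"
  using assms off_lt[of i r] off_lt[of j r]
  by (intro eq_matI) (auto simp: blk_def)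

lemma asm_mult_eq:
  assumes F: "\<And>i j. i \<in> {1..r} \<Longrightarrow> j \<in> {1..r} \<Longrightarrow> F i j \<in> carrier_mat (ns i) (ns j)"
  and G: "\<And>i j. i \<in> {1..r} \<Longrightarrow> j \<in> {1..r} \<Longrightarrow> G i j \<in> carrier_mat (ns i) (ns j)"
  and K: "\<And>i j a b. i \<in> {1..r} \<Longrightarrow> j \<in> {1..r} \<Longrightarrow> a < ns i \<Longrightarrow> b < ns j \<Longrightarrow>
     (\<Sum>t\<in>{1..r}. (F i t * G t j) $$ (a, b)) = K i j $$ (a, b)"
  shows "asm ns r F * asm ns r G = asm ns r K"
proof (rule eq_matI)
  fix p q assume "p < dim_row (asm ns r K)" "q < dim_col (asm ns r K)"
  then have p: "p < off ns (Suc r)" and q: "q < off ns (Suc r)" by (auto simp: asm_def)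
  define i where "i = bi ns p"
  define j where "j = bi ns q"
  define a where "a = p - off ns i"
  define b where "b = q - off ns j"
  have i: "i \<in> {1..r}" and j: "j \<in> {1..r}" and a: "a < ns i" and b: "b < ns j"
    using bi_props[OF p] bi_props[OF q] unfolding i_def j_def a_def b_def by auto
  have "(asm ns r F * asm ns r G) $$ (p, q) = (\<Sum>s<off ns (Suc r). asm ns r F $$ (p, s) * asm ns r G $$ (s, q))"
    using p q by (auto simp: scalar_prod_def lessThan_atLeast0 intro!: sum.cong)
  also have "\<dots> = (\<Sum>t\<in>{1..r}. \<Sum>c<ns t. asm ns r F $$ (p, off ns t + c) * asm ns r G $$ (off ns t + c, q))"
    by (rule sum_split_blocks)
  also have "\<dots> = (\<Sum>t\<in>{1..r}. \<Sum>c<ns t. F i t $$ (a, c) * G t j $$ (c, b))"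
    using p q off_lt[of _ r] by (intro sum.cong refl) (auto simp: asm_def bi_off i_def j_def a_def b_def)
  also have "\<dots> = (\<Sum>t\<in>{1..r}. (F i t * G t j) $$ (a, b))"
  proof (intro sum.cong refl)
    fix t assume t: "t \<in> {1..r}"
    note 1 = carrier_matD[OF F[OF i t]] and 2 = carrier_matD[OF G[OF t j]]
    show "(\<Sum>c<ns t. F i t $$ (a, c) * G t j $$ (c, b)) = (F i t * G t j) $$ (a, b)"
      using 1 2 a b by (auto simp: scalar_prod_def lessThan_atLeast0 intro!: sum.cong)
  qed
  also have "\<dots> = K i j $$ (a, b)" using K[OF i j a b] .
  also have "\<dots> = asm ns r K $$ (p, q)"
    using p q by (simp add: asm_def i_def j_def a_def b_def)
  finally show "(asm ns r F * asm ns r G) $$ (p, q) = asm ns r K $$ (p, q)" .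
qed (auto simp: asm_def)

lemma sum_one: "finite A \<Longrightarrow> u \<in> A \<Longrightarrow> (\<forall>t\<in>A. t \<noteq> u \<longrightarrow> f t = 0) \<Longrightarrow> sum f A = (f u :: 'a::comm_monoid_add)"
  by (simp add: sum.remove sum.neutral)

lemma sum_two: "finite A \<Longrightarrow> u \<in> A \<Longrightarrow> v \<in> A \<Longrightarrow> u \<noteq> v \<Longrightarrow>
   (\<forall>t\<in>A. t \<noteq> u \<and> t \<noteq> v \<longrightarrow> f t = 0) \<Longrightarrow> sum f A = (f u + f v :: 'a::comm_monoid_add)"
proof -
  assume *: "finite A" "u \<in> A" "v \<in> A" "u \<noteq> v" "\<forall>t\<in>A. t \<noteq> u \<and> t \<noteq> v \<longrightarrow> f t = 0"
  have "sum f A = f u + sum f (A - {u})" using * by (simp add: sum.remove)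
  also have "sum f (A - {u}) = f v + sum f (A - {u} - {v})" using * by (intro sum.remove) auto
  also have "sum f (A - {u} - {v}) = 0" using * by (intro sum.neutral) auto
  finally show ?thesis by simp
qed

lemma mult_zero_entry: assumes "P = 0\<^sub>m m k \<or> Q = 0\<^sub>m k l" "P \<in> carrier_mat m k" "Q \<in> carrier_mat k l"
  "a < m" "b < l" shows "(P * Q) $$ (a, b) = 0"
  using assms by auto

lemma minv: assumes "invertible_mat X" "X \<in> carrier_mat m m"
  shows "minv X \<in> carrier_mat m m" "X * minv X = 1\<^sub>m m" "minv X * X = 1\<^sub>m m"
proof -
  have ex: "\<exists>B. inverts_mat X B \<and> inverts_mat B X" using assms(1) unfolding invertible_mat_def by auto
  have "inverts_mat X (minv X) \<and> inverts_mat (minv X) X"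
    unfolding minv_def by (rule someI_ex[OF ex])
  then have 1: "X * minv X = 1\<^sub>m m" and 2: "minv X * X = 1\<^sub>m (dim_row (minv X))"
    using assms(2) unfolding inverts_mat_def by auto
  have "dim_col (X * minv X) = m" using 1 by simp
  then have c: "dim_col (minv X) = m" by simp
  have "dim_row (minv X * X) = dim_row (minv X)" by simp
  have "dim_col (minv X * X) = m" using assms(2) by simp
  then have "dim_row (minv X) = m" using 2 by (metis index_one_mat(3))
  then show "minv X \<in> carrier_mat m m" using c by auto
  show "X * minv X = 1\<^sub>m m" by (rule 1)
  show "minv X * X = 1\<^sub>m m" using 2 \<open>dim_row (minv X) = m\<close> by simp
qed

lemma pd_invertible: assumes "pos_def m X" shows "invertible_mat X"
proof -
  have X: "X \<in> carrier_mat m m" and pos: "\<forall>x\<in>carrier_vec m. x \<noteq> 0\<^sub>v m \<longrightarrow> 0 < Re (qform X x)"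
    using assms unfolding pos_def_iff by auto
  have "det X \<noteq> 0"
  proof
    assume "det X = 0"
    then obtain v where v: "v \<in> carrier_vec m" "v \<noteq> 0\<^sub>v m" "X *\<^sub>v v = 0\<^sub>v m"
      using det_0_iff_vec_prod_zero[OF X] by auto
    have "qform X v = 0" unfolding qform_def using v by simp
    then show False using pos v by auto
  qed
  from det_non_zero_imp_unit[OF X this, of undefined]
  obtain B where B: "B \<in> carrier_mat m m" "X * B = 1\<^sub>m m" "B * X = 1\<^sub>m m"
    unfolding Units_def ring_mat_def by auto
  have d: "dim_row X = m" "dim_col X = m" "dim_row B = m" using X B(1) by auto
  have i1: "inverts_mat X B" unfolding inverts_mat_def using B d by simp
  have i2: "inverts_mat B X" unfolding inverts_mat_def using B d by simp
  show ?thesis unfolding invertible_mat_def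
  proof (intro conjI exI[of _ B])
    show "square_mat X" using d by simp
  qed (rule i1, rule i2)
qed

lemma mult_zero_vec: "A \<in> carrier_mat k m \<Longrightarrow> A *\<^sub>v 0\<^sub>v m = (0\<^sub>v k :: complex vec)"
  by (intro eq_vecI) (auto simp: row_def)

lemma minv_pd: assumes "pos_def m X" shows "pos_def m (minv X)"
proof -
  have X: "X \<in> carrier_mat m m" and pos: "\<forall>x\<in>carrier_vec m. x \<noteq> 0\<^sub>v m \<longrightarrow> 0 < Re (qform X x)"
    using assms unfolding pos_def_iff by auto
  note inv = minv[OF pd_invertible[OF assms] X]
  show ?thesis unfolding pos_def_iff
  proof (intro conjI ballI impI)
    show "minv X \<in> carrier_mat m m" by (rule inv(1))
    fix x :: "complex vec" assume x: "x \<in> carrier_vec m" "x \<noteq> 0\<^sub>v m"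
    define y where "y = minv X *\<^sub>v x"
    have y: "y \<in> carrier_vec m" unfolding y_def by (rule mult_mat_vec_carrier[OF inv(1) x(1)])
    have "(X * minv X) *\<^sub>v x = X *\<^sub>v y" unfolding y_def using inv X x
      by (intro assoc_mult_mat_vec[of _ m m]) auto
    moreover have "(X * minv X) *\<^sub>v x = x" using inv(2) x by simp
    ultimately have xy: "x = X *\<^sub>v y" by simp
    have yn: "y \<noteq> 0\<^sub>v m"
    proof
      assume "y = 0\<^sub>v m"
      then have "x = 0\<^sub>v m" using xy mult_zero_vec[OF X] by simp
      then show False using x(2) by simp
    qed
    have pq: "0 < Re (qform X y)" using pos y yn by auto
    have Xy: "X *\<^sub>v y \<in> carrier_vec m" using X y by simp
    have "qform (minv X) x = conjugate x \<bullet> y"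
      unfolding qform_def y_def ..
    also have "\<dots> = conjugate (X *\<^sub>v y) \<bullet> y" using xy by (rule arg_cong)
    also have "\<dots> = cnj (qform X y)" unfolding qform_def
      by (rule sprod_conj_swap[OF Xy y])
    finally have "qform (minv X) x = cnj (qform X y)" .
    then show "0 < Re (qform (minv X) x)" using pq by simp
  qed
qed

lemma adj_inv_kernel: assumes "invertible_mat Sig" "Sig \<in> carrier_mat m m" "x \<in> carrier_vec m"
  "adj Sig *\<^sub>v x = 0\<^sub>v m" shows "x = 0\<^sub>v m"
proof -
  note inv = minv[OF assms(1,2)]
  have "adj (minv Sig) * adj Sig = 1\<^sub>m m"
    using adj_mult[OF assms(2) inv(1)] inv by simp
  then have "x = (adj (minv Sig) * adj Sig) *\<^sub>v x" using assms by simp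
  also have "\<dots> = adj (minv Sig) *\<^sub>v (adj Sig *\<^sub>v x)"
    using assms inv by (intro assoc_mult_mat_vec[of _ m m]) auto
  also have "\<dots> = 0\<^sub>v m" using assms inv mult_zero_vec[of "adj (minv Sig)" m m] by simp
  finally show ?thesis .
qed

lemma qform_uminus: assumes "M \<in> carrier_mat m m" "x \<in> carrier_vec m"
  shows "qform (- M) x = - qform M x"
  unfolding qform_def using assms by simp

lemma schur_pd:
  assumes ns_mono: "\<forall>i. 1 \<le> i \<and> i + 1 < r \<longrightarrow> ns (i+1) \<le> ns i"
    and H11: "herm_pd (ns 1) (blk ns Ht 1 1)"
    and S_diag: "\<forall>i\<in>{1..r}. skew_hermitian (blk ns St i i)"
    and S_sub: "\<forall>i\<in>{2..<r}.
                  blk ns St i (i - 1) = - adj (blk ns St (i - 1) i)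
                  \<and> (\<exists>Sig \<in> carrier_mat (ns i) (ns i). invertible_mat Sig \<and>
                       blk ns St i (i - 1) =
                         mat (ns i) (ns (i - 1)) (\<lambda>(a, b). if b < ns i then Sig $$ (a, b) else 0))"
  shows "k + 2 \<le> r \<Longrightarrow> pos_def (ns (k+1)) (schur ns Ht St k)"
proof (induction k)
  case 0
  show ?case unfolding pos_def_iff
  proof (intro conjI ballI impI)
    show "schur ns Ht St 0 \<in> carrier_mat (ns (0 + 1)) (ns (0 + 1))" by simp
    fix x :: "complex vec" assume x: "x \<in> carrier_vec (ns (0 + 1))" "x \<noteq> 0\<^sub>v (ns (0 + 1))"
    have e1: "Re (qform (schur ns Ht St 0) x) = Re (qform (blk ns Ht 1 1) x) + Re (qform (blk ns St 1 1) x)"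
      using x by (simp add: qform_add[of _ "ns 1"])
    have e2: "Re (qform (blk ns St 1 1) x) = 0"
      using x S_diag 0 by (intro skew_Re_qform[of _ "ns 1"]) auto
    have e3: "0 < Re (qform (blk ns Ht 1 1) x)" using H11 x unfolding herm_pd_def by auto
    show "0 < Re (qform (schur ns Ht St 0) x)" using e1 e2 e3 by linarith
  qed
next
  case (Suc k)
  then have IH: "pos_def (ns (k+1)) (schur ns Ht St k)" by simp
  define Y where "Y = minv (schur ns Ht St k)"
  have Y: "pos_def (ns (k+1)) Y" unfolding Y_def by (rule minv_pd[OF IH])
  then have Yc: "Y \<in> carrier_mat (ns (k+1)) (ns (k+1))" unfolding pos_def_iff by auto
  define B where "B = blk ns St (k+2) (k+1)"
  have i: "k + 2 \<in> {2..<r}" using Suc by auto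
  have Bc: "B \<in> carrier_mat (ns (k+2)) (ns (k+1))" unfolding B_def by simp
  have e: "k + 2 - 1 = k + 1" by simp
  note Ssub = bspec[OF S_sub i, unfolded e, folded B_def]
  have BC: "B = - adj (blk ns St (k+1) (k+2))" using Ssub by blast
  obtain Sig where Sig: "Sig \<in> carrier_mat (ns (k+2)) (ns (k+2))" "invertible_mat Sig"
    and BS: "B = mat (ns (k+2)) (ns (k+1)) (\<lambda>(a, b). if b < ns (k+2) then Sig $$ (a, b) else 0)"
    using Ssub by blast
  have C: "blk ns St (k+1) (k+2) = - adj B" using BC by (simp add: adj_uminus)
  have mono: "ns (k+2) \<le> ns (k+1)" using ns_mono Suc by auto
  have eq: "schur ns Ht St (Suc k) = blk ns St (k+2) (k+2) - - (B * Y * adj B)"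
  proof -
    have "schur ns Ht St (Suc k) = blk ns St (k+2) (k+2) - B * Y * blk ns St (k+1) (k+2)"
      unfolding B_def Y_def by simp
    also have "\<dots> = blk ns St (k+2) (k+2) - B * Y * (- adj B)" unfolding C ..
    also have "B * Y * (- adj B) = - (B * Y * adj B)"
      using Bc Yc by (intro uminus_mult_right_mat) auto
    finally show ?thesis .
  qed
  show ?case unfolding pos_def_iff
  proof (intro conjI ballI impI)
    show "schur ns Ht St (Suc k) \<in> carrier_mat (ns (Suc k + 1)) (ns (Suc k + 1))"
      unfolding eq using Bc Yc by auto
    fix x :: "complex vec" assume x: "x \<in> carrier_vec (ns (Suc k + 1))" "x \<noteq> 0\<^sub>v (ns (Suc k + 1))"
    have x': "x \<in> carrier_vec (ns (k+2))" using x by simp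
    have BYB: "B * Y * adj B \<in> carrier_mat (ns (k+2)) (ns (k+2))" using Bc Yc by auto
    have e1: "Re (qform (schur ns Ht St (Suc k)) x) = Re (qform (blk ns St (k+2) (k+2)) x) + Re (qform (B * Y * adj B) x)"
      unfolding eq using x' BYB by (simp add: qform_minus[of _ "ns (k+2)"] qform_uminus[of _ "ns (k+2)"])
    have e2: "Re (qform (blk ns St (k+2) (k+2)) x) = 0"
      using x' S_diag Suc by (intro skew_Re_qform[of _ "ns (k+2)"]) auto
    have e3: "qform (B * Y * adj B) x = qform Y (adj B *\<^sub>v x)"
      by (rule qform_sandwich[OF Bc Yc x'])
    have e4: "0 < Re (qform Y (adj B *\<^sub>v x))"
    proof -
      have nz: "adj B *\<^sub>v x \<noteq> 0\<^sub>v (ns (k+1))"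
      proof
        assume z: "adj B *\<^sub>v x = 0\<^sub>v (ns (k+1))"
        have "adj Sig *\<^sub>v x = 0\<^sub>v (ns (k+2))"
        proof (rule eq_vecI)
          fix b assume "b < dim_vec (0\<^sub>v (ns (k+2)) :: complex vec)"
          then have b: "b < ns (k+2)" by simp
          then have b1: "b < ns (k+1)" using mono by simp
          have "(adj Sig *\<^sub>v x) $ b = (adj B *\<^sub>v x) $ b"
            using b b1 Sig(1) Bc x' unfolding BS
            by (auto simp: scalar_prod_def row_def intro!: sum.cong)
          also have "\<dots> = 0" using z b1 by simp
          finally show "(adj Sig *\<^sub>v x) $ b = 0\<^sub>v (ns (k+2)) $ b" using b by simp
        qed (use Sig(1) in auto)
        then have "x = 0\<^sub>v (ns (k+2))" by (rule adj_inv_kernel[OF Sig(2,1) x'])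
        then show False using x by simp
      qed
      show ?thesis using Y nz Bc x' unfolding pos_def_iff by auto
    qed
    show "0 < Re (qform (schur ns Ht St (Suc k)) x)" using e1 e2 e3 e4 by simp
  qed
qed

theorem lemma4p2:
  fixes n r :: nat and ns :: "nat \<Rightarrow> nat" and A H S U :: "complex mat"
  assumes HS: "H \<in> carrier_mat n n" "S \<in> carrier_mat n n" "A = H + S"
    and H_herm: "hermitian H" and H_nz: "H \<noteq> 0\<^sub>m n n" and H_psd: "pos_semidef n H"
    and S_skew: "skew_hermitian S" and S_nz: "S \<noteq> 0\<^sub>m n n"
    and U: "unitary n U"
    and r: "r \<ge> 2"
    and ns_mono: "\<forall>i. 1 \<le> i \<and> i + 1 < r \<longrightarrow> ns (i+1) \<le> ns i"
    and ns_pos: "\<forall>i. 1 \<le> i \<and> i < r \<longrightarrow> 0 < ns i"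
    and ns_sum: "(\<Sum>i\<in>{1..r}. ns i) = n"
    and Hblk: "\<forall>i\<in>{1..r}. \<forall>j\<in>{1..r}. (i, j) \<noteq> (1, 1) \<longrightarrow>
                  blk ns (adj U * H * U) i j = 0\<^sub>m (ns i) (ns j)"
    and H11: "herm_pd (ns 1) (blk ns (adj U * H * U) 1 1)"
    and S_band: "\<forall>i\<in>{1..r}. \<forall>j\<in>{1..r}. (i + 1 < j \<or> j + 1 < i) \<longrightarrow>
                  blk ns (adj U * S * U) i j = 0\<^sub>m (ns i) (ns j)"
    and S_last: "\<forall>i\<in>{1..<r}. blk ns (adj U * S * U) i r = 0\<^sub>m (ns i) (ns r)
                  \<and> blk ns (adj U * S * U) r i = 0\<^sub>m (ns r) (ns i)"
    and S_diag: "\<forall>i\<in>{1..r}. skew_hermitian (blk ns (adj U * S * U) i i)"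
    and S_sub: "\<forall>i\<in>{2..<r}.
                  blk ns (adj U * S * U) i (i - 1) = - adj (blk ns (adj U * S * U) (i - 1) i)
                  \<and> (\<exists>Sig \<in> carrier_mat (ns i) (ns i). invertible_mat Sig \<and>
                       blk ns (adj U * S * U) i (i - 1) =
                         mat (ns i) (ns (i - 1)) (\<lambda>(a, b). if b < ns i then Sig $$ (a, b) else 0))"
  shows "(\<forall>k. k + 2 < r \<longrightarrow> invertible_mat (schur ns (adj U * H * U) (adj U * S * U) k))
    \<and> (\<forall>k. k + 2 \<le> r \<longrightarrow> pos_def (ns (k + 1)) (schur ns (adj U * H * U) (adj U * S * U) k))
    \<and> (\<exists>L D W. L \<in> carrier_mat n n \<and> D \<in> carrier_mat n n \<and> W \<in> carrier_mat n n
        \<and> adj U * A * U = L * D * W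
        \<and> (\<forall>i\<in>{1..r}. blk ns L i i = 1\<^sub>m (ns i) \<and> blk ns W i i = 1\<^sub>m (ns i))
        \<and> (\<forall>i\<in>{1..r}. \<forall>j\<in>{1..r}. i < j \<longrightarrow>
             blk ns L i j = 0\<^sub>m (ns i) (ns j) \<and> blk ns W j i = 0\<^sub>m (ns j) (ns i))
        \<and> (\<forall>i\<in>{1..r}. \<forall>j\<in>{1..r}. i \<noteq> j \<longrightarrow> blk ns D i j = 0\<^sub>m (ns i) (ns j))
        \<and> (\<forall>i\<in>{1..<r}. blk ns D i i = schur ns (adj U * H * U) (adj U * S * U) (i - 1))
        \<and> blk ns D r r = blk ns (adj U * S * U) r r)"
proof -
  define Ht where "Ht = adj U * H * U"
  define St where "St = adj U * S * U"
  define X where "X = schur ns Ht St"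
  define Sb where "Sb = blk ns St"
  define Hb where "Hb = blk ns Ht"
  have n_off: "off ns (Suc r) = n" using ns_sum by (simp add: off_def atLeastLessThanSuc_atLeastAtMost)
  have Uc: "U \<in> carrier_mat n n" using U unfolding unitary_def by auto
  have Htc: "Ht \<in> carrier_mat n n" unfolding Ht_def using Uc HS by auto
  have Stc: "St \<in> carrier_mat n n" unfolding St_def using Uc HS by auto
  have Mt: "adj U * A * U = Ht + St"
  proof -
    have "adj U * A = adj U * H + adj U * S" unfolding HS(3) using Uc HS
      by (intro mult_add_distrib_mat[of _ n n]) auto
    then have "adj U * A * U = (adj U * H + adj U * S) * U" by simp
    also have "\<dots> = adj U * H * U + adj U * S * U"
      using Uc HS by (intro add_mult_distrib_mat[of _ n n]) auto
    finally show ?thesis unfolding Ht_def St_def .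
  qed
  have PD: "\<And>k. k + 2 \<le> r \<Longrightarrow> pos_def (ns (k+1)) (X k)"
    unfolding X_def
    by (rule schur_pd[OF ns_mono H11[folded Ht_def] S_diag[folded St_def] S_sub[folded St_def]])
  have INV: "\<And>k. k + 2 < r \<Longrightarrow> invertible_mat (X k)"
    using PD pd_invertible by (metis less_imp_le)
  have Xc: "\<And>i. 1 \<le> i \<Longrightarrow> i < r \<Longrightarrow> X (i - 1) \<in> carrier_mat (ns i) (ns i)"
  proof -
    fix i :: nat assume "1 \<le> i" "i < r"
    then have "i - 1 + 2 \<le> r" "i - 1 + 1 = i" by auto
    then show "X (i - 1) \<in> carrier_mat (ns i) (ns i)" using PD[of "i - 1"] unfolding pos_def_def by simp
  qed
  have XI: "\<And>i. 1 \<le> i \<Longrightarrow> i + 1 < r \<Longrightarrow> minv (X (i - 1)) \<in> carrier_mat (ns i) (ns i)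
      \<and> X (i - 1) * minv (X (i - 1)) = 1\<^sub>m (ns i) \<and> minv (X (i - 1)) * X (i - 1) = 1\<^sub>m (ns i)"
  proof -
    fix i :: nat assume i: "1 \<le> i" "i + 1 < r"
    have inv: "invertible_mat (X (i - 1))" using INV[of "i - 1"] i by simp
    show "minv (X (i - 1)) \<in> carrier_mat (ns i) (ns i)
      \<and> X (i - 1) * minv (X (i - 1)) = 1\<^sub>m (ns i) \<and> minv (X (i - 1)) * X (i - 1) = 1\<^sub>m (ns i)"
      using minv[OF inv Xc] i by auto
  qed
  define Db where "Db = (\<lambda>i j. if i = j then (if i < r then X (i - 1) else Sb r r) else 0\<^sub>m (ns i) (ns j))"
  define Lb where "Lb = (\<lambda>i j. if i = j then 1\<^sub>m (ns i) else if i = Suc j \<and> i < r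
      then Sb i j * minv (X (j - 1)) else 0\<^sub>m (ns i) (ns j))"
  define Wb where "Wb = (\<lambda>i j. if i = j then 1\<^sub>m (ns i) else if j = Suc i \<and> j < r
      then minv (X (i - 1)) * Sb i j else 0\<^sub>m (ns i) (ns j))"
  define LDb where "LDb = (\<lambda>i j. if i = j then Db i i else if i = Suc j \<and> i < r
      then Sb i j else 0\<^sub>m (ns i) (ns j))"
  have Sbc: "\<And>i j. Sb i j \<in> carrier_mat (ns i) (ns j)" unfolding Sb_def by simp
  have Dbc: "\<And>i j. i \<in> {1..r} \<Longrightarrow> j \<in> {1..r} \<Longrightarrow> Db i j \<in> carrier_mat (ns i) (ns j)"
    unfolding Db_def using Xc Sbc by auto
  have Lbc: "\<And>i j. i \<in> {1..r} \<Longrightarrow> j \<in> {1..r} \<Longrightarrow> Lb i j \<in> carrier_mat (ns i) (ns j)"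
  proof -
    fix i j :: nat assume ij: "i \<in> {1..r}" "j \<in> {1..r}"
    show "Lb i j \<in> carrier_mat (ns i) (ns j)"
    proof (cases "i \<noteq> j \<and> i = Suc j \<and> i < r")
      case True
      then have "minv (X (j - 1)) \<in> carrier_mat (ns j) (ns j)" using XI[of j] ij by auto
      then show ?thesis using True Sbc[of i j] unfolding Lb_def by auto
    qed (auto simp: Lb_def)
  qed
  have Wbc: "\<And>i j. i \<in> {1..r} \<Longrightarrow> j \<in> {1..r} \<Longrightarrow> Wb i j \<in> carrier_mat (ns i) (ns j)"
  proof -
    fix i j :: nat assume ij: "i \<in> {1..r}" "j \<in> {1..r}"
    show "Wb i j \<in> carrier_mat (ns i) (ns j)"
    proof (cases "i \<noteq> j \<and> j = Suc i \<and> j < r")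
      case True
      then have "minv (X (i - 1)) \<in> carrier_mat (ns i) (ns i)" using XI[of i] ij by auto
      then show ?thesis using True Sbc[of i j] unfolding Wb_def by auto
    qed (auto simp: Wb_def)
  qed
  have LDbc: "\<And>i j. i \<in> {1..r} \<Longrightarrow> j \<in> {1..r} \<Longrightarrow> LDb i j \<in> carrier_mat (ns i) (ns j)"
    unfolding LDb_def using Dbc Sbc by auto
  define L where "L = asm ns r Lb"
  define D where "D = asm ns r Db"
  define W where "W = asm ns r Wb"
  have LD: "L * D = asm ns r LDb"
    unfolding L_def D_def
  proof (rule asm_mult_eq[OF Lbc Dbc])
    fix i j a b assume i: "i \<in> {1..r}" and j: "j \<in> {1..r}" and a: "a < ns i" and b: "b < ns j"
    have "(\<Sum>t\<in>{1..r}. (Lb i t * Db t j) $$ (a, b)) = (Lb i j * Db j j) $$ (a, b)"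
    proof (rule sum_one)
      show "\<forall>t\<in>{1..r}. t \<noteq> j \<longrightarrow> (Lb i t * Db t j) $$ (a, b) = 0"
      proof (intro ballI impI)
        fix t assume t: "t \<in> {1..r}" "t \<noteq> j"
        then have "Db t j = 0\<^sub>m (ns t) (ns j)" unfolding Db_def by simp
        then show "(Lb i t * Db t j) $$ (a, b) = 0"
          by (intro mult_zero_entry[OF _ Lbc[OF i t(1)] Dbc[OF t(1) j] a b]) simp
      qed
    qed (use j in auto)
    also have "Lb i j * Db j j = LDb i j"
    proof (cases "i = j")
      case True
      then show ?thesis using Dbc[OF j j] unfolding Lb_def LDb_def by simp
    next
      case False
      show ?thesis
      proof (cases "i = Suc j \<and> i < r")
        case True
        have XIj: "minv (X (j - 1)) * X (j - 1) = 1\<^sub>m (ns j)"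
          "minv (X (j - 1)) \<in> carrier_mat (ns j) (ns j)" using XI[of j] j True by auto
        have Dj: "Db j j = X (j - 1)" using True unfolding Db_def by simp
        have "Lb i j * Db j j = Sb i j * minv (X (j - 1)) * X (j - 1)"
          using True False unfolding Lb_def Dj by simp
        also have "\<dots> = Sb i j * (minv (X (j - 1)) * X (j - 1))"
          using Sbc XIj Xc[of j] j True by (intro assoc_mult_mat) auto
        also have "\<dots> = Sb i j" using XIj Sbc[of i j] by simp
        finally show ?thesis using True False unfolding LDb_def by simp
      next
        case False2: False
        have "Lb i j = 0\<^sub>m (ns i) (ns j)" "LDb i j = 0\<^sub>m (ns i) (ns j)"
          using False False2 unfolding Lb_def LDb_def by auto
        then show ?thesis using Dbc[OF j j] by simp
      qed
    qed
    finally show "(\<Sum>t\<in>{1..r}. (Lb i t * Db t j) $$ (a, b)) = LDb i j $$ (a, b)" .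
  qed
  have LDW: "asm ns r LDb * W = asm ns r (blk ns (Ht + St))"
    unfolding W_def
  proof (rule asm_mult_eq[OF LDbc Wbc])
    fix i j a b assume i: "i \<in> {1..r}" and j: "j \<in> {1..r}" and a: "a < ns i" and b: "b < ns j"
    define g where "g = (\<lambda>t. (LDb i t * Wb t j) $$ (a, b))"
    have gz: "\<And>t. t \<in> {1..r} \<Longrightarrow> \<not> ((t = i \<or> (i = Suc t \<and> i < r)) \<and> (t = j \<or> (j = Suc t \<and> j < r)))
       \<Longrightarrow> g t = 0"
    proof -
      fix t assume t: "t \<in> {1..r}" and nt: "\<not> ((t = i \<or> (i = Suc t \<and> i < r)) \<and> (t = j \<or> (j = Suc t \<and> j < r)))"
      have "LDb i t = 0\<^sub>m (ns i) (ns t) \<or> Wb t j = 0\<^sub>m (ns t) (ns j)"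
        using nt unfolding LDb_def Wb_def by auto
      then show "g t = 0" unfolding g_def
        by (rule mult_zero_entry[OF _ LDbc[OF i t] Wbc[OF t j] a b])
    qed
    have blkM: "blk ns (Ht + St) i j = Hb i j + Sb i j"
      unfolding Hb_def Sb_def using Htc Stc i j n_off by (intro blk_add) auto
    have Hz: "(i, j) \<noteq> (1, 1) \<Longrightarrow> blk ns (Ht + St) i j = Sb i j"
      unfolding blkM using Hblk[folded Ht_def] i j Sbc[of i j] unfolding Hb_def by simp
    have "(\<Sum>t\<in>{1..r}. g t) = blk ns (Ht + St) i j $$ (a, b)"
    proof (cases "j = i")
      case ji: True
      show ?thesis
      proof (cases "i = 1")
        case True
        have "(\<Sum>t\<in>{1..r}. g t) = g 1"
          by (rule sum_one) (use gz ji True r in auto)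
        also have "g 1 = X 0 $$ (a, b)"
          unfolding g_def LDb_def Wb_def Db_def using True ji r Xc[of 1] by simp
        also have "X 0 = blk ns (Ht + St) i j"
          unfolding blkM X_def Hb_def Sb_def using True ji by simp
        finally show ?thesis .
      next
        case i1: False
        show ?thesis
        proof (cases "i = r")
          case True
          have "(\<Sum>t\<in>{1..r}. g t) = g r"
            by (rule sum_one) (use gz ji True r in auto)
          also have "g r = Sb r r $$ (a, b)"
            unfolding g_def LDb_def Wb_def Db_def using True ji Sbc[of r r] by simp
          also have "Sb r r = blk ns (Ht + St) i j" using Hz True ji r by simp
          finally show ?thesis .
        next
          case False
          then have ir: "2 \<le> i" "i < r" using i i1 by auto
          have "(\<Sum>t\<in>{1..r}. g t) = g i + g (i - 1)"
            by (rule sum_two) (use gz ji ir i in auto)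
          also have "g i = X (i - 1) $$ (a, b)"
            unfolding g_def LDb_def Wb_def Db_def using ir ji Xc[of i] by simp
          also have "g (i - 1) = (Sb i (i - 1) * (minv (X (i - 1 - 1)) * Sb (i - 1) i)) $$ (a, b)"
          proof -
            have c: "i - 1 \<noteq> i" "i = Suc (i - 1)" using ir by auto
            have "LDb i (i - 1) = Sb i (i - 1)" unfolding LDb_def using c ir by metis
            moreover have "Wb (i - 1) j = minv (X (i - 1 - 1)) * Sb (i - 1) i"
              unfolding Wb_def using c ir ji by metis
            ultimately show ?thesis unfolding g_def by simp
          qed
          also have "Sb i (i - 1) * (minv (X (i - 1 - 1)) * Sb (i - 1) i)
              = Sb i (i - 1) * minv (X (i - 1 - 1)) * Sb (i - 1) i"
          proof -
            have mc: "minv (X (i - 1 - 1)) \<in> carrier_mat (ns (i - 1)) (ns (i - 1))"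
              using XI[of "i - 1"] ir by auto
            show ?thesis by (rule assoc_mult_mat[symmetric, OF Sbc mc Sbc])
          qed
          also have "X (i - 1) = Sb i i - Sb i (i - 1) * minv (X (i - 1 - 1)) * Sb (i - 1) i"
          proof -
            have e: "i - 1 = Suc (i - 2)" "i - 1 - 1 = i - 2" "i - 2 + 2 = i" "i - 2 + 1 = i - 1" using ir by auto
            show ?thesis unfolding X_def Sb_def e(1) schur.simps(2) e(3,4) unfolding e(1)[symmetric] e(2) ..
          qed
          also have "(Sb i i - Sb i (i - 1) * minv (X (i - 1 - 1)) * Sb (i - 1) i) $$ (a, b)
              + (Sb i (i - 1) * minv (X (i - 1 - 1)) * Sb (i - 1) i) $$ (a, b) = Sb i i $$ (a, b)"
            using a b ji Sbc[of i "i-1"] Sbc[of "i-1" i] by simp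
          also have "Sb i i = blk ns (Ht + St) i j" using Hz ir ji by simp
          finally show ?thesis .
        qed
      qed
    next
      case nji: False
      show ?thesis
      proof (cases "j = Suc i \<and> j < r")
        case True
        have "(\<Sum>t\<in>{1..r}. g t) = g i"
          by (rule sum_one) (use gz True i in auto)
        also have "g i = (X (i - 1) * (minv (X (i - 1)) * Sb i j)) $$ (a, b)"
          unfolding g_def LDb_def Wb_def Db_def using True by simp
        also have "X (i - 1) * (minv (X (i - 1)) * Sb i j) = X (i - 1) * minv (X (i - 1)) * Sb i j"
          using XI[of i] Xc[of i] True i Sbc by (intro assoc_mult_mat[symmetric]) auto
        also have "\<dots> = Sb i j" using XI[of i] True i Sbc[of i j] by simp
        also have "Sb i j = blk ns (Ht + St) i j" using Hz True by simp
        finally show ?thesis .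
      next
        case nB: False
        show ?thesis
        proof (cases "i = Suc j \<and> i < r")
          case True
          have "(\<Sum>t\<in>{1..r}. g t) = g j"
            by (rule sum_one) (use gz True j in auto)
          also have "g j = Sb i j $$ (a, b)"
            unfolding g_def LDb_def Wb_def using True Sbc[of i j] by simp
          also have "Sb i j = blk ns (Ht + St) i j" using Hz True j by simp
          finally show ?thesis .
        next
          case nC: False
          have "(\<Sum>t\<in>{1..r}. g t) = 0"
          proof (rule sum.neutral, intro ballI)
            fix t assume t: "t \<in> {1..r}"
            show "g t = 0"
            proof (rule gz[OF t])
              show "\<not> ((t = i \<or> (i = Suc t \<and> i < r)) \<and> (t = j \<or> (j = Suc t \<and> j < r)))"
                using nji nB nC by auto
            qed
          qed
          also have "0 = blk ns (Ht + St) i j $$ (a, b)"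
          proof -
            have "Sb i j = 0\<^sub>m (ns i) (ns j)"
            proof (cases "i + 1 < j \<or> j + 1 < i")
              case True then show ?thesis using S_band[folded St_def] i j unfolding Sb_def by auto
            next
              case False
              then have "(j = Suc i \<and> j = r) \<or> (i = Suc j \<and> i = r)" using nji nB nC i j by auto
              then show ?thesis using S_last[folded St_def] i j unfolding Sb_def by auto
            qed
            moreover have "(i, j) \<noteq> (1, 1)" using nji by auto
            ultimately show ?thesis using Hz a b by simp
          qed
          finally show ?thesis .
        qed
      qed
    qed
    then show "(\<Sum>t\<in>{1..r}. (LDb i t * Wb t j) $$ (a, b)) = blk ns (Ht + St) i j $$ (a, b)"
      unfolding g_def .
  qed
  have fact: "adj U * A * U = L * D * W"
    unfolding Mt LD LDW using Htc Stc n_off by (intro asm_blk[symmetric]) auto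
  have c1: "\<forall>k. k + 2 < r \<longrightarrow> invertible_mat (schur ns (adj U * H * U) (adj U * S * U) k)"
    using INV unfolding X_def Ht_def St_def by blast
  have c2: "\<forall>k. k + 2 \<le> r \<longrightarrow> pos_def (ns (k + 1)) (schur ns (adj U * H * U) (adj U * S * U) k)"
    using PD unfolding X_def Ht_def St_def by blast
  have Lc: "L \<in> carrier_mat n n" and Dc: "D \<in> carrier_mat n n" and Wc: "W \<in> carrier_mat n n"
    unfolding L_def D_def W_def n_off[symmetric] by simp_all
  have B1: "\<forall>i\<in>{1..r}. blk ns L i i = 1\<^sub>m (ns i) \<and> blk ns W i i = 1\<^sub>m (ns i)"
  proof
    fix i assume i: "i \<in> {1..r}"
    show "blk ns L i i = 1\<^sub>m (ns i) \<and> blk ns W i i = 1\<^sub>m (ns i)"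
      unfolding L_def W_def using blk_asm[where ns=ns and F=Lb, OF i i Lbc[OF i i]] blk_asm[where ns=ns and F=Wb, OF i i Wbc[OF i i]]
      by (simp add: Lb_def Wb_def)
  qed
  have B2: "\<forall>i\<in>{1..r}. \<forall>j\<in>{1..r}. i < j \<longrightarrow>
             blk ns L i j = 0\<^sub>m (ns i) (ns j) \<and> blk ns W j i = 0\<^sub>m (ns j) (ns i)"
  proof (intro ballI impI)
    fix i j assume i: "i \<in> {1..r}" and j: "j \<in> {1..r}" and ij: "i < j"
    show "blk ns L i j = 0\<^sub>m (ns i) (ns j) \<and> blk ns W j i = 0\<^sub>m (ns j) (ns i)"
      unfolding L_def W_def using blk_asm[where ns=ns and F=Lb, OF i j Lbc[OF i j]] blk_asm[where ns=ns and F=Wb, OF j i Wbc[OF j i]] ij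
      by (simp add: Lb_def Wb_def)
  qed
  have B3: "\<forall>i\<in>{1..r}. \<forall>j\<in>{1..r}. i \<noteq> j \<longrightarrow> blk ns D i j = 0\<^sub>m (ns i) (ns j)"
  proof (intro ballI impI)
    fix i j assume i: "i \<in> {1..r}" and j: "j \<in> {1..r}" and ij: "i \<noteq> j"
    show "blk ns D i j = 0\<^sub>m (ns i) (ns j)"
      unfolding D_def using blk_asm[where ns=ns and F=Db, OF i j Dbc[OF i j]] ij by (simp add: Db_def)
  qed
  have B4: "\<forall>i\<in>{1..<r}. blk ns D i i = schur ns (adj U * H * U) (adj U * S * U) (i - 1)"
  proof
    fix i assume i: "i \<in> {1..<r}"
    then have i': "i \<in> {1..r}" by auto
    show "blk ns D i i = schur ns (adj U * H * U) (adj U * S * U) (i - 1)"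
      unfolding D_def using blk_asm[where ns=ns and F=Db, OF i' i' Dbc[OF i' i']] i by (simp add: Db_def X_def Ht_def St_def)
  qed
  have rr: "r \<in> {1..r}" using r by auto
  have B5: "blk ns D r r = blk ns (adj U * S * U) r r"
    unfolding D_def using blk_asm[where ns=ns and F=Db, OF rr rr Dbc[OF rr rr]] by (simp add: Db_def Sb_def St_def)
  show ?thesis using c1 c2 Lc Dc Wc fact B1 B2 B3 B4 B5 by blast
qed

end
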